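(* Let $\operatorname{R}_4=\{a_0,a_1,a_2,a_3\}$ be the dihedral quandle of order $4$, with $a_ia_j=a_{2j-i \pmod 4}$. Then the set of non-zero idempotents of $\mathbb{Z}[\operatorname{R}_4]$ is $$I(\mathbb{Z}[\operatorname{R}_4])=\Big\{t\big(a_0+\alpha(a_2-a_0)\big)+(1-t)\big(a_1+\beta(a_3-a_1)\big)~|~t\in\{0,1\},~\alpha,\beta\in\mathbb{Z}\Big\}.$$
   Context: For a quandle $Q$, the quandle ring $\mathbb{Z}[Q]$ is the free abelian group with basis $Q$, with multiplication $\big(\sum_i\alpha_i q_i\big)\big(\sum_j\beta_j q_j\big)=\sum_{i,j}\alpha_i\beta_j (q_iq_j)$. $I(\mathbb{Z}[Q])$ denotes the set of non-zero elements $w$ with $w^2=w$. *)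

theory Defs
  imports Main
begin

text \<open>Quandle ring Z[Q] for a finite quandle with carrier Q and operation op:
elements are integer-valued functions on the carrier, zero outside Q (finitely
supported formal sums of basis elements).\<close>

definition qring :: "'a set \<Rightarrow> ('a \<Rightarrow> int) set" where
  "qring Q = {w. \<forall>x. x \<notin> Q \<longrightarrow> w x = 0}"

definition qmult :: "'a set \<Rightarrow> ('a \<Rightarrow> 'a \<Rightarrow> 'a) \<Rightarrow> ('a \<Rightarrow> int) \<Rightarrow> ('a \<Rightarrow> int) \<Rightarrow> ('a \<Rightarrow> int)" where
  "qmult Q op u v = (\<lambda>k. \<Sum>(i,j)\<in>{(i,j). i \<in> Q \<and> j \<in> Q \<and> op i j = k}. u i * v j)"

definition basis :: "'a \<Rightarrow> ('a \<Rightarrow> int)" where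
  "basis q = (\<lambda>x. if x = q then 1 else 0)"

definition idempotents :: "'a set \<Rightarrow> ('a \<Rightarrow> 'a \<Rightarrow> 'a) \<Rightarrow> ('a \<Rightarrow> int) set" where
  "idempotents Q op = {w \<in> qring Q. w \<noteq> (\<lambda>_. 0) \<and> qmult Q op w w = w}"

definition R4 :: "nat set" where "R4 = {0,1,2,3}"

definition R4op :: "nat \<Rightarrow> nat \<Rightarrow> nat" where
  "R4op i j = nat ((2 * int j - int i) mod 4)"

end

theory Submission
  imports Defs
begin

lemma key:
  fixes a b c d :: int
  assumes h1: "a = a*(a+c) + c*(b+d)" and h2: "c = c*(a+c) + a*(b+d)"
    and h3: "b = d*(a+c) + b*(b+d)" and h4: "d = b*(a+c) + d*(b+d)"
    and nz: "\<not> (a = 0 \<and> b = 0 \<and> c = 0 \<and> d = 0)"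
  shows "(a + c = 1 \<and> b = 0 \<and> d = 0) \<or> (a = 0 \<and> c = 0 \<and> b + d = 1)"
proof -
  define E where "E = a + c"
  define Od where "Od = b + d"
  have e1: "E * (E + Od) = E" using h1 h2 unfolding E_def Od_def by (simp add: algebra_simps)
  have e2: "Od * (E + Od) = Od" using h3 h4 unfolding E_def Od_def by (simp add: algebra_simps)
  have s: "E + Od = 1"
  proof (rule ccontr)
    assume "E + Od \<noteq> 1"
    then have "E = 0" "Od = 0" using e1 e2
      by (metis mult.right_neutral mult_cancel_left)+
    then have "a = 0" "c = 0" "b = 0" "d = 0" using h1 h2 h3 h4 unfolding E_def Od_def by simp_all
    then show False using nz by simp
  qed
  then have Od: "Od = 1 - E" by simp
  have f1: "(a - c) * (1 - E) = 0" using h1 Od unfolding E_def Od_def by (simp add: algebra_simps)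
  have f2: "(b - d) * E = 0" using h3 Od unfolding E_def Od_def by (simp add: algebra_simps)
  show ?thesis
  proof (cases "E = 0")
    case True
    then have "a = c" using f1 by simp
    then show ?thesis using True Od unfolding E_def Od_def by simp
  next
    case False
    then have bd: "b = d" using f2 by simp
    show ?thesis
    proof (cases "E = 1")
      case True
      then show ?thesis using bd Od unfolding E_def Od_def by simp
    next
      case False
      then have "a = c" using f1 by simp
      then have "2 * (a + b) = 1" using bd s unfolding E_def Od_def by simp
      then show ?thesis by presburger
    qed
  qed
qed

lemma R4op_in: "R4op i j \<in> R4"
  unfolding R4op_def R4_def
proof -
  have "0 \<le> (2 * int j - int i) mod 4" "(2 * int j - int i) mod 4 < 4" by simp_all
  then show "nat ((2 * int j - int i) mod 4) \<in> {0, 1, 2, 3}" by (auto simp: eval_nat_numeral) 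
qed

lemma qm_sum:
  "qmult R4 R4op u v k = (\<Sum>p\<in>R4 \<times> R4. if R4op (fst p) (snd p) = k then u (fst p) * v (snd p) else 0)"
proof -
  have "{(i,j). i \<in> R4 \<and> j \<in> R4 \<and> R4op i j = k} = {p \<in> R4 \<times> R4. R4op (fst p) (snd p) = k}"
    by auto
  moreover have "finite (R4 \<times> R4)" by (simp add: R4_def)
  ultimately show ?thesis unfolding qmult_def
    by (simp add: sum.inter_filter case_prod_beta)
qed

lemma qm:
  "qmult R4 R4op u v k =
    (if k = 0 then u 0 * (v 0 + v 2) + u 2 * (v 1 + v 3)
     else if k = 1 then u 3 * (v 0 + v 2) + u 1 * (v 1 + v 3)
     else if k = 2 then u 2 * (v 0 + v 2) + u 0 * (v 1 + v 3)
     else if k = 3 then u 1 * (v 0 + v 2) + u 3 * (v 1 + v 3) else 0)"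
  unfolding qm_sum unfolding R4_def
  by (simp add: R4op_def algebra_simps)

lemma R4_cases: "x \<in> R4 \<Longrightarrow> x = 0 \<or> x = 1 \<or> x = 2 \<or> x = 3"
  by (auto simp: R4_def)

theorem proposition4p4:
  shows "idempotents R4 R4op =
    {(\<lambda>x. t * (basis 0 x + \<alpha> * (basis 2 x - basis 0 x))
          + (1 - t) * (basis 1 x + \<beta> * (basis 3 x - basis 1 x))) | t \<alpha> \<beta> :: int.
       t \<in> {0, 1}}" (is "?L = ?R")
proof
  show "?L \<subseteq> ?R"
  proof
    fix w assume "w \<in> ?L"
    then have q: "w \<in> qring R4" and nz: "w \<noteq> (\<lambda>_. 0)" and idm: "qmult R4 R4op w w = w"
      unfolding idempotents_def by auto
    have out: "\<And>x. x \<noteq> 0 \<Longrightarrow> x \<noteq> 1 \<Longrightarrow> x \<noteq> 2 \<Longrightarrow> x \<noteq> 3 \<Longrightarrow> w x = 0"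
      using q unfolding qring_def R4_def by auto
    have nz': "\<not> (w 0 = 0 \<and> w 1 = 0 \<and> w 2 = 0 \<and> w 3 = 0)"
    proof
      assume z: "w 0 = 0 \<and> w 1 = 0 \<and> w 2 = 0 \<and> w 3 = 0"
      have "w = (\<lambda>_. 0)"
      proof
        fix x show "w x = 0" using z out[of x] by (cases "x = 0 \<or> x = 1 \<or> x = 2 \<or> x = 3") auto
      qed
      then show False using nz by simp
    qed
    have k0: "w 0 = w 0 * (w 0 + w 2) + w 2 * (w 1 + w 3)" using fun_cong[OF idm, of 0] by (simp add: qm)
    have k1: "w 1 = w 3 * (w 0 + w 2) + w 1 * (w 1 + w 3)" using fun_cong[OF idm, of 1] by (simp add: qm)
    have k2: "w 2 = w 2 * (w 0 + w 2) + w 0 * (w 1 + w 3)" using fun_cong[OF idm, of 2] by (simp add: qm)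
    have k3: "w 3 = w 1 * (w 0 + w 2) + w 3 * (w 1 + w 3)" using fun_cong[OF idm, of 3] by (simp add: qm)
    from key[OF k0 k2 k1 k3] nz'
    have cs: "(w 0 + w 2 = 1 \<and> w 1 = 0 \<and> w 3 = 0) \<or> (w 0 = 0 \<and> w 2 = 0 \<and> w 1 + w 3 = 1)" by auto
    then show "w \<in> ?R"
    proof
      assume h: "w 0 + w 2 = 1 \<and> w 1 = 0 \<and> w 3 = 0"
      have "w = (\<lambda>x. 1 * (basis 0 x + w 2 * (basis 2 x - basis 0 x))
          + (1 - 1) * (basis 1 x + 0 * (basis 3 x - basis 1 x)))"
      proof
        fix x show "w x = 1 * (basis 0 x + w 2 * (basis 2 x - basis 0 x))
          + (1 - 1) * (basis 1 x + 0 * (basis 3 x - basis 1 x))"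
          using h out[of x] by (cases "x = 0 \<or> x = 1 \<or> x = 2 \<or> x = 3") (auto simp: basis_def)
      qed
      then show ?thesis by blast
    next
      assume h: "w 0 = 0 \<and> w 2 = 0 \<and> w 1 + w 3 = 1"
      have "w = (\<lambda>x. 0 * (basis 0 x + 0 * (basis 2 x - basis 0 x))
          + (1 - 0) * (basis 1 x + w 3 * (basis 3 x - basis 1 x)))"
      proof
        fix x show "w x = 0 * (basis 0 x + 0 * (basis 2 x - basis 0 x))
          + (1 - 0) * (basis 1 x + w 3 * (basis 3 x - basis 1 x))"
          using h out[of x] by (cases "x = 0 \<or> x = 1 \<or> x = 2 \<or> x = 3") (auto simp: basis_def)
      qed
      then show ?thesis by blast
    qed
  qed
next
  show "?R \<subseteq> ?L"
  proof
    fix w assume "w \<in> ?R"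
    then obtain t \<alpha> \<beta> :: int where t: "t \<in> {0, 1}" and w: "w = (\<lambda>x. t * (basis 0 x + \<alpha> * (basis 2 x - basis 0 x))
          + (1 - t) * (basis 1 x + \<beta> * (basis 3 x - basis 1 x)))" by blast
    have q: "w \<in> qring R4" unfolding qring_def R4_def w basis_def by auto
    have nz: "w \<noteq> (\<lambda>_. 0)"
    proof
      assume "w = (\<lambda>_. 0)"
      then have "w 0 + w 1 + w 2 + w 3 = 0" by simp
      then show False using t unfolding w basis_def by auto
    qed
    have "qmult R4 R4op w w = w"
    proof
      fix k show "qmult R4 R4op w w k = w k"
        using t unfolding qm w basis_def by (auto simp: algebra_simps)
    qed
    then show "w \<in> ?L" using q nz unfolding idempotents_def by auto
  qed
qed

end
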